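(* Let $\Gamma$ be a discrete group, $V$ a left $\Gamma$-set and $\mathcal G=\Gamma\ltimes V$ the transformation groupoid. Let $E$ be a left $\Gamma$-set with a $1$-cocycle $\varphi\colon\Gamma\times E\to\Gamma$, $(h,e)\mapsto h|_e$ (i.e. $(gh)|_e=g|_{h\cdot e}\cdot h|_e$ for all $g,h\in\Gamma$, $e\in E$), and maps $r,s\colon E\to V$ with $s(g\cdot e)=(g|_e)\cdot s(e)$ and $r(g\cdot e)=g\cdot r(e)$ for all $g\in\Gamma$, $e\in E$. Then $X=E\times\Gamma$ with the discrete topology, anchors $r(e,g)=r(e)$, $s(e,g)=g^{-1}\cdot s(e)$, right $\Gamma$-action $(e,g)\cdot g_2=(e,gg_2)$ and left $\Gamma$-action $h\cdot(e,g)=(h\cdot e,h|_e\cdot g)$ is a groupoid correspondence $\mathcal G\leftarrow\mathcal G$. Every groupoid correspondence $\mathcal G\leftarrow\mathcal G$ is isomorphic to one of this form, where $(E,r,s)$ is unique up to isomorphism and $\varphi$ is unique up to the action of the group of maps $\psi\colon E\to\Gamma$ given by $\varphi^\psi(h,e)=\psi(h\cdot e)^{-1}\varphi(h,e)\psi(e)$. The correspondence $X$ is proper if and only if $r\colon E\to V$ is finite-to-one, and tight if and only if $r\colon E\to V$ is bijective.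
   Context: $V$ carries the discrete topology; $\Gamma\ltimes V$ has arrows $(g,v)$ with $s(g,v)=v$, $r(g,v)=gv$. An action of $\Gamma\ltimes V$ on a space is the same as a $\Gamma$-action together with a $\Gamma$-equivariant anchor map to $V$ (for right actions: $s(x\gamma)=\gamma^{-1}s(x)$). A groupoid correspondence $X\colon\mathcal H\leftarrow\mathcal G$ between étale groupoids is a space with commuting continuous left $\mathcal H$-action (anchor $r$) and right $\mathcal G$-action (anchor $s$), such that $s$ is a local homeomorphism and the right action is free and proper (the map $(x,g)\mapsto(xg,x)$ is injective and proper). Isomorphism of correspondences means a biequivariant homeomorphism. $X$ is proper if $r_*\colon X/\mathcal G\to\mathcal H^0$ is proper, and tight if $r_*$ is a homeomorphism. *)

theory Defs
  imports "HOL-Analysis.Analysis"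
begin

text \<open>The discrete group Gamma is a type 'g of class group_add
(written additively: g h is g + h, the inverse of g is - g, the unit is 0;
commutativity is NOT assumed). V is the type 'v with the discrete topology,
Gamma acting on the left by act. A correspondence over Gamma x| V is given by
a topological space X with a left Gamma-action la, a right Gamma-action ra
(ra x g is x.g), the left anchor rX and the right anchor sX.\<close>

definition left_action :: "('g::group_add \<Rightarrow> 'a \<Rightarrow> 'a) \<Rightarrow> 'a set \<Rightarrow> bool" where
  "left_action a A \<longleftrightarrow>
     (\<forall>g. \<forall>x\<in>A. a g x \<in> A) \<and> (\<forall>x\<in>A. a 0 x = x) \<and>
     (\<forall>g h. \<forall>x\<in>A. a (g + h) x = a g (a h x))"

definition right_action :: "('a \<Rightarrow> 'g::group_add \<Rightarrow> 'a) \<Rightarrow> 'a set \<Rightarrow> bool" where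
  "right_action a A \<longleftrightarrow>
     (\<forall>g. \<forall>x\<in>A. a x g \<in> A) \<and> (\<forall>x\<in>A. a x 0 = x) \<and>
     (\<forall>g h. \<forall>x\<in>A. a x (g + h) = a (a x g) h)"

definition local_homeomorphism_map :: "'a topology \<Rightarrow> 'b topology \<Rightarrow> ('a \<Rightarrow> 'b) \<Rightarrow> bool" where
  "local_homeomorphism_map X Y f \<longleftrightarrow>
     f ` topspace X \<subseteq> topspace Y \<and>
     (\<forall>x\<in>topspace X. \<exists>U. openin X U \<and> x \<in> U \<and> openin Y (f ` U) \<and>
        homeomorphic_map (subtopology X U) (subtopology Y (f ` U)) f)"

text \<open>An action of the
transformation groupoid is a Gamma-action with an equivariant anchor; for the
right action s(x.g) = g^-1 s(x). Continuity of the action maps amounts to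
continuity of each translation since Gamma x| V is discrete. The right action is
free and proper: (x,g) |-> (x.g, x) from X x Gamma (= X x_{s,r} (Gamma x| V))
to X x X is injective and proper.\<close>

definition is_corr ::
  "('g::group_add \<Rightarrow> 'v \<Rightarrow> 'v) \<Rightarrow> 'x topology \<Rightarrow> ('g \<Rightarrow> 'x \<Rightarrow> 'x) \<Rightarrow> ('x \<Rightarrow> 'g \<Rightarrow> 'x)
     \<Rightarrow> ('x \<Rightarrow> 'v) \<Rightarrow> ('x \<Rightarrow> 'v) \<Rightarrow> bool" where
  "is_corr act X la ra rX sX \<longleftrightarrow>
     left_action la (topspace X) \<and> right_action ra (topspace X) \<and>
     (\<forall>h. continuous_map X X (la h)) \<and> (\<forall>g. continuous_map X X (\<lambda>x. ra x g)) \<and>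
     continuous_map X (discrete_topology UNIV) rX \<and>
     continuous_map X (discrete_topology UNIV) sX \<and>
     (\<forall>h. \<forall>x\<in>topspace X. rX (la h x) = act h (rX x)) \<and>
     (\<forall>g. \<forall>x\<in>topspace X. sX (ra x g) = act (- g) (sX x)) \<and>
     (\<forall>g h. \<forall>x\<in>topspace X. la h (ra x g) = ra (la h x) g) \<and>
     (\<forall>g. \<forall>x\<in>topspace X. rX (ra x g) = rX x) \<and>
     (\<forall>h. \<forall>x\<in>topspace X. sX (la h x) = sX x) \<and>
     local_homeomorphism_map X (discrete_topology UNIV) sX \<and>
     inj_on (\<lambda>(x, g). (ra x g, x)) (topspace X \<times> UNIV) \<and>
     proper_map (prod_topology X (discrete_topology (UNIV :: 'g set)))
                (prod_topology X X) (\<lambda>(x, g). (ra x g, x))"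

definition corr_iso ::
  "'x topology \<Rightarrow> ('g \<Rightarrow> 'x \<Rightarrow> 'x) \<Rightarrow> ('x \<Rightarrow> 'g \<Rightarrow> 'x) \<Rightarrow> ('x \<Rightarrow> 'v) \<Rightarrow> ('x \<Rightarrow> 'v) \<Rightarrow>
   'y topology \<Rightarrow> ('g \<Rightarrow> 'y \<Rightarrow> 'y) \<Rightarrow> ('y \<Rightarrow> 'g \<Rightarrow> 'y) \<Rightarrow> ('y \<Rightarrow> 'v) \<Rightarrow> ('y \<Rightarrow> 'v) \<Rightarrow>
   ('x \<Rightarrow> 'y) \<Rightarrow> bool" where
  "corr_iso X la ra rX sX Y lb rb rY sY f \<longleftrightarrow>
     homeomorphic_map X Y f \<and>
     (\<forall>h. \<forall>x\<in>topspace X. f (la h x) = lb h (f x)) \<and>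
     (\<forall>g. \<forall>x\<in>topspace X. f (ra x g) = rb (f x) g) \<and>
     (\<forall>x\<in>topspace X. rY (f x) = rX x) \<and>
     (\<forall>x\<in>topspace X. sY (f x) = sX x)"

definition orbits :: "'x topology \<Rightarrow> ('x \<Rightarrow> 'g \<Rightarrow> 'x) \<Rightarrow> 'x set set" where
  "orbits X ra = (\<lambda>x. range (ra x)) ` topspace X"

definition orbit_space :: "'x topology \<Rightarrow> ('x \<Rightarrow> 'g \<Rightarrow> 'x) \<Rightarrow> 'x set topology" where
  "orbit_space X ra = topology (\<lambda>U. U \<subseteq> orbits X ra \<and> openin X (\<Union>U))"

definition r_star :: "('x \<Rightarrow> 'v) \<Rightarrow> 'x set \<Rightarrow> 'v" where
  "r_star rX Orb = rX (SOME x. x \<in> Orb)"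

definition proper_corr :: "'x topology \<Rightarrow> ('x \<Rightarrow> 'g \<Rightarrow> 'x) \<Rightarrow> ('x \<Rightarrow> 'v) \<Rightarrow> bool" where
  "proper_corr X ra rX \<longleftrightarrow>
     proper_map (orbit_space X ra) (discrete_topology UNIV) (r_star rX)"

definition tight_corr :: "'x topology \<Rightarrow> ('x \<Rightarrow> 'g \<Rightarrow> 'x) \<Rightarrow> ('x \<Rightarrow> 'v) \<Rightarrow> bool" where
  "tight_corr X ra rX \<longleftrightarrow>
     homeomorphic_map (orbit_space X ra) (discrete_topology UNIV) (r_star rX)"

text \<open>Cocycle data (E, Eact, phi, r, s), where phi h e stands for h|_e.\<close>

definition cocycle_data ::
  "('g::group_add \<Rightarrow> 'v \<Rightarrow> 'v) \<Rightarrow> 'e set \<Rightarrow> ('g \<Rightarrow> 'e \<Rightarrow> 'e) \<Rightarrow> ('g \<Rightarrow> 'e \<Rightarrow> 'g)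
     \<Rightarrow> ('e \<Rightarrow> 'v) \<Rightarrow> ('e \<Rightarrow> 'v) \<Rightarrow> bool" where
  "cocycle_data act E Eact phi rE sE \<longleftrightarrow>
     left_action Eact E \<and>
     (\<forall>g h. \<forall>e\<in>E. phi (g + h) e = phi g (Eact h e) + phi h e) \<and>
     (\<forall>g. \<forall>e\<in>E. sE (Eact g e) = act (phi g e) (sE e)) \<and>
     (\<forall>g. \<forall>e\<in>E. rE (Eact g e) = act g (rE e))"

definition cX_top :: "'e set \<Rightarrow> ('e \<times> 'g) topology" where
  "cX_top E = discrete_topology (E \<times> UNIV)"

definition cX_la :: "('g \<Rightarrow> 'e \<Rightarrow> 'e) \<Rightarrow> ('g \<Rightarrow> 'e \<Rightarrow> 'g::group_add) \<Rightarrow> 'g \<Rightarrow> 'e \<times> 'g \<Rightarrow> 'e \<times> 'g" where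
  "cX_la Eact phi h p = (Eact h (fst p), phi h (fst p) + snd p)"

definition cX_ra :: "'e \<times> 'g \<Rightarrow> 'g \<Rightarrow> 'e \<times> 'g::group_add" where
  "cX_ra p g2 = (fst p, snd p + g2)"

definition cX_r :: "('e \<Rightarrow> 'v) \<Rightarrow> 'e \<times> 'g \<Rightarrow> 'v" where
  "cX_r rE p = rE (fst p)"

definition cX_s :: "('g::group_add \<Rightarrow> 'v \<Rightarrow> 'v) \<Rightarrow> ('e \<Rightarrow> 'v) \<Rightarrow> 'e \<times> 'g \<Rightarrow> 'v" where
  "cX_s act sE p = act (- snd p) (sE (fst p))"

end

theory Submission
  imports Defs
begin


lemma disc_homeo:
  "homeomorphic_map (discrete_topology A) (discrete_topology B) f \<longleftrightarrow> bij_betw f A B"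
proof
  assume "homeomorphic_map (discrete_topology A) (discrete_topology B) f"
  then show "bij_betw f A B"
    using homeomorphic_imp_surjective_map homeomorphic_imp_injective_map
    by (metis bij_betw_def topspace_discrete_topology)
next
  assume b: "bij_betw f A B"
  show "homeomorphic_map (discrete_topology A) (discrete_topology B) f"
    apply (rule bijective_open_imp_homeomorphic_map)
    using b by (auto simp: open_map_into_discrete_topology bij_betw_def)
qed

lemma loc_homeo_disc:
  assumes "local_homeomorphism_map X (discrete_topology UNIV) s"
  shows "X = discrete_topology (topspace X)"
proof -
  have "openin X {x}" if x: "x \<in> topspace X" for x
  proof -
    obtain U where U: "openin X U" "x \<in> U"
      and h: "homeomorphic_map (subtopology X U) (subtopology (discrete_topology UNIV) (s ` U)) s"
      using assms x unfolding local_homeomorphism_map_def by blast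
    have tU: "topspace (subtopology X U) = U"
      using U openin_subset by (auto simp: topspace_subtopology)
    have inj: "inj_on s U" using homeomorphic_imp_injective_map[OF h] tU by simp
    have c: "continuous_map (subtopology X U) (discrete_topology (s ` U)) s"
      using homeomorphic_imp_continuous_map[OF h] by simp
    have "openin (subtopology X U) {y \<in> topspace (subtopology X U). s y \<in> {s x}}"
    proof -
      have "\<forall>V. openin (discrete_topology (s ` U)) V \<longrightarrow>
              openin (subtopology X U) {y \<in> topspace (subtopology X U). s y \<in> V}"
        using c unfolding continuous_map_def by blast
      moreover have "openin (discrete_topology (s ` U)) {s x}" using U by auto
      ultimately show ?thesis by blast
    qed
    moreover have "{y \<in> topspace (subtopology X U). s y \<in> {s x}} = {x}"
      using inj U tU by (auto dest: inj_onD)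
    ultimately have "openin (subtopology X U) {x}" by simp
    then show ?thesis using U openin_trans_full by blast
  qed
  then show ?thesis by (metis discrete_topology_unique)
qed

lemma proper_disc:
  "proper_map (discrete_topology A) (discrete_topology B) f \<longleftrightarrow>
    f ` A \<subseteq> B \<and> (\<forall>y\<in>B. finite {x\<in>A. f x = y})"
  unfolding proper_map_def closed_map_into_discrete_topology
  by (auto simp: compactin_discrete_topology)

lemma part1:
  fixes act :: "'g::group_add \<Rightarrow> 'v \<Rightarrow> 'v" and E :: "'e set"
  assumes act0: "\<And>v. act 0 v = v"
    and act_add: "\<And>g h v. act (g + h) v = act g (act h v)"
    and cd: "cocycle_data act E Eact phi rE sE"
  shows "is_corr act (cX_top E) (cX_la Eact phi) cX_ra (cX_r rE) (cX_s act sE)"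
proof -
  have la: "left_action Eact E"
    and coc: "\<And>g h e. e \<in> E \<Longrightarrow> phi (g + h) e = phi g (Eact h e) + phi h e"
    and sE: "\<And>g e. e \<in> E \<Longrightarrow> sE (Eact g e) = act (phi g e) (sE e)"
    and rE: "\<And>g e. e \<in> E \<Longrightarrow> rE (Eact g e) = act g (rE e)"
    using cd unfolding cocycle_data_def by auto
  have Ein: "\<And>g e. e \<in> E \<Longrightarrow> Eact g e \<in> E"
    and E0: "\<And>e. e \<in> E \<Longrightarrow> Eact 0 e = e"
    and Eadd: "\<And>g h e. e \<in> E \<Longrightarrow> Eact (g + h) e = Eact g (Eact h e)"
    using la unfolding left_action_def by auto
  have phi0: "phi 0 e = 0" if "e \<in> E" for e
  proof -
    have "phi 0 e + phi 0 e = phi 0 e + 0" using coc[of e 0 0] E0[OF that] that by simp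
    then show ?thesis by (simp only: add_left_cancel)
  qed
  have T: "topspace (cX_top E :: ('e \<times> 'g) topology) = E \<times> UNIV" by (simp add: cX_top_def)
  have A1: "left_action (cX_la Eact phi) (topspace (cX_top E))"
    unfolding left_action_def T cX_la_def
    by (auto simp: Ein E0 phi0 Eadd coc add.assoc)
  have A2: "right_action cX_ra (topspace (cX_top E))"
    unfolding right_action_def cX_ra_def by (auto simp: add.assoc cX_top_def)
  have A3: "\<forall>h. continuous_map (cX_top E) (cX_top E) (cX_la Eact phi h)"
    by (auto simp: cX_top_def cX_la_def Ein)
  have A4: "\<forall>g. continuous_map (cX_top E) (cX_top E) (\<lambda>x. cX_ra x g)"
    by (auto simp: cX_top_def cX_ra_def)
  have A5: "continuous_map (cX_top E) (discrete_topology UNIV) (cX_r rE)"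
    "continuous_map (cX_top E) (discrete_topology UNIV) (cX_s act sE)"
    by (auto simp: cX_top_def)
  have A6: "\<forall>h. \<forall>x\<in>topspace (cX_top E). cX_r rE (cX_la Eact phi h x) = act h (cX_r rE x)"
    by (auto simp: T cX_r_def cX_la_def rE)
  have A7: "\<forall>g. \<forall>x\<in>topspace (cX_top E). cX_s act sE (cX_ra x g) = act (- g) (cX_s act sE x)"
  proof (intro allI ballI)
    fix g x
    have "act (- (snd x + g)) (sE (fst x)) = act (- g) (act (- snd x) (sE (fst x)))"
      by (simp only: minus_add act_add)
    then show "cX_s act sE (cX_ra x g) = act (- g) (cX_s act sE x)"
      by (simp add: cX_s_def cX_ra_def)
  qed
  have A8: "\<forall>g h. \<forall>x\<in>topspace (cX_top E). cX_la Eact phi h (cX_ra x g) = cX_ra (cX_la Eact phi h x) g"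
    by (auto simp: T cX_la_def cX_ra_def add.assoc)
  have A9: "\<forall>g. \<forall>x\<in>topspace (cX_top E). cX_r rE (cX_ra x g) = cX_r rE x"
    by (auto simp: cX_r_def cX_ra_def)
  have A10: "\<forall>h. \<forall>x\<in>topspace (cX_top E). cX_s act sE (cX_la Eact phi h x) = cX_s act sE x"
  proof (intro allI ballI)
    fix h and x :: "'e \<times> 'g" assume "x \<in> topspace (cX_top E)"
    then obtain e and k :: 'g where x: "x = (e, k)" "e \<in> E" using T by (cases x) auto
    have "act (- (phi h e + k)) (act (phi h e) (sE e)) = act (- k) (sE e)"
      by (simp add: minus_add act_add[symmetric] add.assoc)
    then show "cX_s act sE (cX_la Eact phi h x) = cX_s act sE x"
      using x by (simp add: cX_s_def cX_la_def sE)
  qed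
  have A11: "local_homeomorphism_map (cX_top E) (discrete_topology UNIV) (cX_s act sE)"
    unfolding local_homeomorphism_map_def
  proof (intro conjI ballI)
    fix x :: "'e \<times> 'g" assume x: "x \<in> topspace (cX_top E)"
    show "\<exists>U. openin (cX_top E) U \<and> x \<in> U \<and> openin (discrete_topology UNIV) (cX_s act sE ` U) \<and>
          homeomorphic_map (subtopology (cX_top E) U)
            (subtopology (discrete_topology UNIV) (cX_s act sE ` U)) (cX_s act sE)"
      apply (rule exI[of _ "{x}"])
      using x by (auto simp: cX_top_def disc_homeo bij_betw_def Int_absorb1)
  qed auto
  have A12: "inj_on (\<lambda>(x, g). (cX_ra x g, x)) (topspace (cX_top E) \<times> UNIV)"
    by (auto simp: inj_on_def cX_ra_def)
  have A13: "proper_map (prod_topology (cX_top E) (discrete_topology (UNIV :: 'g set)))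
                (prod_topology (cX_top E) (cX_top E)) (\<lambda>(x, g). (cX_ra x g, x))"
    unfolding cX_top_def prod_topology_discrete_topology[symmetric] proper_disc
  proof (intro conjI ballI)
    show "(\<lambda>(x, g). (cX_ra x g, x)) ` ((E \<times> UNIV) \<times> UNIV) \<subseteq> (E \<times> UNIV) \<times> E \<times> UNIV"
      by (auto simp: cX_ra_def)
    fix y
    have "finite ((\<lambda>(x, g). (cX_ra x g, x)) -` {y} \<inter> ((E \<times> UNIV) \<times> UNIV))"
      by (rule finite_vimage_IntI) (auto simp: inj_on_def cX_ra_def)
    then show "finite {x \<in> (E \<times> UNIV) \<times> UNIV. (\<lambda>(x, g). (cX_ra x g, x)) x = y}"
      by (simp add: vimage_def Int_def conj_commute)
  qed
  show ?thesis unfolding is_corr_def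
    using A1 A2 A3 A4 A5 A6 A7 A8 A9 A10 A11 A12 A13 by blast
qed



lemma orbits_cX:
  "orbits (cX_top E) (cX_ra :: 'e \<times> 'g::group_add \<Rightarrow> 'g \<Rightarrow> 'e \<times> 'g) = (\<lambda>e. {e} \<times> UNIV) ` E"
proof -
  have "range (cX_ra (e, k)) = {e} \<times> (UNIV :: 'g set)" for e and k :: 'g
  proof
    show "range (cX_ra (e, k)) \<subseteq> {e} \<times> UNIV" by (auto simp: cX_ra_def)
    show "{e} \<times> UNIV \<subseteq> range (cX_ra (e, k))"
    proof
      fix x assume "x \<in> {e} \<times> (UNIV :: 'g set)"
      then have "x = cX_ra (e, k) (- k + snd x)" by (auto simp: cX_ra_def add.assoc[symmetric])
      then show "x \<in> range (cX_ra (e, k))" by blast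
    qed
  qed
  then have H: "range (cX_ra x) = {fst x} \<times> (UNIV :: 'g set)" for x :: "'e \<times> 'g"
    by (cases x) simp
  have F: "fst ` (E \<times> (UNIV :: 'g set)) = E" by auto
  have "(\<lambda>x. range (cX_ra x)) ` (E \<times> (UNIV :: 'g set)) =
        (\<lambda>e. {e} \<times> (UNIV :: 'g set)) ` (fst ` (E \<times> (UNIV :: 'g set)))"
    unfolding H image_image by (rule refl)
  then show ?thesis unfolding orbits_def cX_top_def topspace_discrete_topology F .
qed

lemma orbit_space_cX:
  "orbit_space (cX_top E) (cX_ra :: 'e \<times> 'g::group_add \<Rightarrow> 'g \<Rightarrow> 'e \<times> 'g) =
     discrete_topology ((\<lambda>e. {e} \<times> UNIV) ` E)"
proof -
  have "(\<lambda>U. U \<subseteq> (\<lambda>e. {e} \<times> UNIV) ` E \<and> openin (cX_top E) (\<Union>U)) =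
        (\<lambda>U. U \<subseteq> (\<lambda>e. {e} \<times> (UNIV :: 'g set)) ` E)"
    by (auto simp: cX_top_def fun_eq_iff)
  then show ?thesis unfolding orbit_space_def orbits_cX discrete_topology_def by simp
qed

lemma r_star_cX: "r_star (cX_r rE) ({e} \<times> (UNIV :: 'g set)) = rE e"
proof -
  have "(SOME x. x \<in> {e} \<times> (UNIV :: 'g set)) \<in> {e} \<times> UNIV" by (rule someI_ex) auto
  then show ?thesis by (auto simp: r_star_def cX_r_def)
qed

lemma part4:
  "proper_corr (cX_top E) (cX_ra :: 'e \<times> 'g::group_add \<Rightarrow> 'g \<Rightarrow> 'e \<times> 'g) (cX_r rE)
     \<longleftrightarrow> (\<forall>v. finite {e \<in> E. rE e = v})"
proof -
  let ?O = "\<lambda>e. {e} \<times> (UNIV :: 'g set)"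
  have inj: "inj_on ?O A" for A by (auto simp: inj_on_def)
  have eq: "{x \<in> ?O ` E. r_star (cX_r rE) x = v} = ?O ` {e \<in> E. rE e = v}" for v
    by (auto simp: r_star_cX)
  show ?thesis
    unfolding proper_corr_def orbit_space_cX proper_disc eq
    using finite_image_iff[OF inj] by auto
qed

lemma part5:
  "tight_corr (cX_top E) (cX_ra :: 'e \<times> 'g::group_add \<Rightarrow> 'g \<Rightarrow> 'e \<times> 'g) (cX_r rE)
     \<longleftrightarrow> bij_betw rE E UNIV"
proof -
  let ?O = "\<lambda>e. {e} \<times> (UNIV :: 'g set)"
  have b: "bij_betw ?O E (?O ` E)" by (auto simp: bij_betw_def inj_on_def)
  have "bij_betw (r_star (cX_r rE)) (?O ` E) UNIV \<longleftrightarrow> bij_betw (r_star (cX_r rE) \<circ> ?O) E UNIV"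
    by (rule bij_betw_comp_iff[OF b])
  also have "\<dots> \<longleftrightarrow> bij_betw rE E UNIV"
    by (rule bij_betw_cong) (simp add: r_star_cX)
  finally show ?thesis
    unfolding tight_corr_def orbit_space_cX disc_homeo .
qed

lemma part3:
  fixes act :: "'g::group_add \<Rightarrow> 'v \<Rightarrow> 'v" and E :: "'e set" and E' :: "'f set"
  assumes act0: "\<And>v. act 0 v = v"
    and act_add: "\<And>g h v. act (g + h) v = act g (act h v)"
    and cd: "cocycle_data act E Eact phi rE sE"
    and cd': "cocycle_data act E' Eact' phi' rE' sE'"
    and iso: "corr_iso (cX_top E) (cX_la Eact phi) cX_ra (cX_r rE) (cX_s act sE)
                       (cX_top E') (cX_la Eact' phi') cX_ra (cX_r rE') (cX_s act sE') f"
  shows "\<exists>\<tau> (\<psi> :: 'e \<Rightarrow> 'g).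
               bij_betw \<tau> E E' \<and>
               (\<forall>h. \<forall>e\<in>E. \<tau> (Eact h e) = Eact' h (\<tau> e)) \<and>
               (\<forall>e\<in>E. rE' (\<tau> e) = rE e) \<and>
               (\<forall>e\<in>E. sE' (\<tau> e) = act (- \<psi> e) (sE e)) \<and>
               (\<forall>h. \<forall>e\<in>E. phi' h (\<tau> e) = - \<psi> (Eact h e) + phi h e + \<psi> e)"
proof -
  have Ein: "\<And>g e. e \<in> E \<Longrightarrow> Eact g e \<in> E"
    using cd unfolding cocycle_data_def left_action_def by auto
  have hm: "homeomorphic_map (discrete_topology (E \<times> (UNIV :: 'g set)))
              (discrete_topology (E' \<times> (UNIV :: 'g set))) f"
    and fla: "\<And>h x. x \<in> E \<times> UNIV \<Longrightarrow> f (cX_la Eact phi h x) = cX_la Eact' phi' h (f x)"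
    and fra: "\<And>g x. x \<in> E \<times> UNIV \<Longrightarrow> f (cX_ra x g) = cX_ra (f x) g"
    and fr: "\<And>x. x \<in> E \<times> UNIV \<Longrightarrow> cX_r rE' (f x) = cX_r rE x"
    and fs: "\<And>x. x \<in> E \<times> UNIV \<Longrightarrow> cX_s act sE' (f x) = cX_s act sE x"
    using iso unfolding corr_iso_def cX_top_def by auto
  have bij: "bij_betw f (E \<times> UNIV) (E' \<times> UNIV)" using hm disc_homeo by blast
  define \<tau> where "\<tau> e = fst (f (e, 0))" for e
  define k where "k e = snd (f (e, 0))" for e
  have f0: "f (e, 0) = (\<tau> e, k e)" for e by (simp add: \<tau>_def k_def)
  have fg: "f (e, g) = (\<tau> e, k e + g)" if "e \<in> E" for e g
  proof -
    have "f (cX_ra (e, 0) g) = cX_ra (f (e, 0)) g" using fra that by auto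
    then show ?thesis by (simp add: cX_ra_def f0)
  qed
  have tE: "\<tau> e \<in> E'" if "e \<in> E" for e
    using bij that unfolding bij_betw_def f0 by (metis (no_types, lifting) UNIV_I f0 image_eqI mem_Sigma_iff prod.inject) 
  have b1: "bij_betw \<tau> E E'"
    unfolding bij_betw_def
  proof (intro conjI)
    show "inj_on \<tau> E"
    proof (rule inj_onI)
      fix a b assume ab: "a \<in> E" "b \<in> E" "\<tau> a = \<tau> b"
      have "f (a, - k a) = f (b, - k b)" using ab by (simp add: fg)
      then show "a = b" using bij ab unfolding bij_betw_def inj_on_def by blast
    qed
    show "\<tau> ` E = E'"
    proof
      show "\<tau> ` E \<subseteq> E'" using tE by auto
      show "E' \<subseteq> \<tau> ` E"
      proof
        fix e' assume "e' \<in> E'"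
        then have "(e', 0) \<in> f ` (E \<times> UNIV)" using bij unfolding bij_betw_def by auto
        then obtain e g where "e \<in> E" "f (e, g) = (e', 0)" by auto
        then show "e' \<in> \<tau> ` E" using fg by auto
      qed
    qed
  qed
  have b2: "\<forall>h. \<forall>e\<in>E. \<tau> (Eact h e) = Eact' h (\<tau> e) \<and>
              phi' h (\<tau> e) = - (- k (Eact h e)) + phi h e + - k e"
  proof (intro allI ballI)
    fix h e assume e: "e \<in> E"
    have "f (cX_la Eact phi h (e, 0)) = cX_la Eact' phi' h (f (e, 0))" using fla e by auto
    then have "(\<tau> (Eact h e), k (Eact h e) + phi h e) = (Eact' h (\<tau> e), phi' h (\<tau> e) + k e)"
      by (simp add: cX_la_def fg e Ein f0)
    then show "\<tau> (Eact h e) = Eact' h (\<tau> e) \<and>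
              phi' h (\<tau> e) = - (- k (Eact h e)) + phi h e + - k e"
      by (auto simp: add.assoc eq_neg_iff_add_eq_0 add_eq_0_iff2 diff_conv_add_uminus[symmetric]
            eq_diff_eq)
  qed
  have b3: "\<forall>e\<in>E. rE' (\<tau> e) = rE e"
    unfolding \<tau>_def using fr by (auto simp: cX_r_def)
  have b4: "\<forall>e\<in>E. sE' (\<tau> e) = act (- (- k e)) (sE e)"
  proof
    fix e assume e: "e \<in> E"
    have "act (- k e) (sE' (\<tau> e)) = sE e" using fs[of "(e,0)"] e by (simp add: cX_s_def f0 act0)
    then have "act (- (- k e)) (sE e) = act (k e + - k e) (sE' (\<tau> e))"
      by (simp only: minus_minus act_add)
    then show "sE' (\<tau> e) = act (- (- k e)) (sE e)"
      by (simp add: act0)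
  qed
  show ?thesis
    apply (rule exI[of _ \<tau>], rule exI[of _ "\<lambda>e. - k e"])
    using b1 b2 b3 b4 by blast
qed



lemma part2:
  fixes act :: "'g::group_add \<Rightarrow> 'v \<Rightarrow> 'v" and X :: "'x topology"
  assumes act0: "\<And>v. act 0 v = v"
    and act_add: "\<And>g h v. act (g + h) v = act g (act h v)"
    and corr: "is_corr act X la ra rX sX"
  shows "\<exists>(E :: 'x set) Eact phi rE sE f.
           cocycle_data act E Eact phi rE sE \<and>
           corr_iso X la ra rX sX
             (cX_top E) (cX_la Eact phi) cX_ra (cX_r rE) (cX_s act sE) f"
proof -
  define T where "T = topspace X"
  have lin: "left_action la T" and rin: "right_action ra T"
    and rXla: "\<And>h x. x \<in> T \<Longrightarrow> rX (la h x) = act h (rX x)"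
    and sXra: "\<And>g x. x \<in> T \<Longrightarrow> sX (ra x g) = act (- g) (sX x)"
    and comm: "\<And>g h x. x \<in> T \<Longrightarrow> la h (ra x g) = ra (la h x) g"
    and rXra: "\<And>g x. x \<in> T \<Longrightarrow> rX (ra x g) = rX x"
    and sXla: "\<And>h x. x \<in> T \<Longrightarrow> sX (la h x) = sX x"
    and lh: "local_homeomorphism_map X (discrete_topology UNIV) sX"
    and inj: "inj_on (\<lambda>(x, g). (ra x g, x)) (T \<times> UNIV)"
    using corr unfolding is_corr_def T_def by auto
  have la_in: "\<And>g x. x \<in> T \<Longrightarrow> la g x \<in> T"
    and la0: "\<And>x. x \<in> T \<Longrightarrow> la 0 x = x"
    and la_add: "\<And>g h x. x \<in> T \<Longrightarrow> la (g + h) x = la g (la h x)"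
    using lin unfolding left_action_def by auto
  have ra_in: "\<And>g x. x \<in> T \<Longrightarrow> ra x g \<in> T"
    and ra0: "\<And>x. x \<in> T \<Longrightarrow> ra x 0 = x"
    and ra_add: "\<And>g h x. x \<in> T \<Longrightarrow> ra x (g + h) = ra (ra x g) h"
    using rin unfolding right_action_def by auto
  have free: "g = g'" if "x \<in> T" "ra x g = ra x g'" for x g g'
    using inj that unfolding inj_on_def by auto
  have Xd: "discrete_topology T = X"
    using loc_homeo_disc[OF lh] T_def by simp
  have actinv: "act c (act (- c) v) = v" for c v
    by (metis act0 act_add add.right_inverse)
  have orb: "range (ra y) = range (ra x)" if "x \<in> T" "y = ra x c" for x y c
  proof
    show "range (ra y) \<subseteq> range (ra x)"
      using that by (auto simp: ra_add[symmetric])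
    show "range (ra x) \<subseteq> range (ra y)"
    proof
      fix z assume "z \<in> range (ra x)"
      then obtain g where z: "z = ra x g" by auto
      have "ra y (- c + g) = ra x (c + (- c + g))" using that by (simp add: ra_add[symmetric])
      also have "\<dots> = z" by (simp add: z add.assoc[symmetric])
      finally show "z \<in> range (ra y)" by (metis rangeI)
    qed
  qed
  define \<sigma> where "\<sigma> x = (SOME y. y \<in> range (ra x))" for x
  have sig_mem: "\<sigma> x \<in> range (ra x)" for x
    unfolding \<sigma>_def by (rule someI_ex) auto
  have sig_eq: "\<sigma> y = \<sigma> x" if "x \<in> T" "y = ra x c" for x y c
    unfolding \<sigma>_def using orb[OF that] by simp
  have sig_in: "\<sigma> x \<in> T" if "x \<in> T" for x
    using sig_mem[of x] ra_in[OF that] by auto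
  define cc where "cc x = (SOME c. x = ra (\<sigma> x) c)" for x
  have decomp: "x = ra (\<sigma> x) (cc x)" if x: "x \<in> T" for x
  proof -
    obtain d where d: "\<sigma> x = ra x d" using sig_mem[of x] by auto
    have "ra (\<sigma> x) (- d) = x" using x by (simp add: d ra_add[symmetric] ra0)
    then have "\<exists>c. x = ra (\<sigma> x) c" by metis
    then show ?thesis unfolding cc_def by (rule someI_ex)
  qed
  define E where "E = \<sigma> ` T"
  have ET: "E \<subseteq> T" using sig_in E_def by auto
  have sig_idem: "\<sigma> e = e" if e: "e \<in> E" for e
  proof -
    obtain x where x: "x \<in> T" "e = \<sigma> x" using e E_def by auto
    obtain d where d: "\<sigma> x = ra x d" using sig_mem[of x] by auto
    show ?thesis using sig_eq[OF x(1), of e d] x d by simp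
  qed
  have dec2: "\<sigma> (ra e c) = e \<and> cc (ra e c) = c" if e: "e \<in> E" for e c
  proof -
    have eT: "e \<in> T" using e ET by auto
    have s: "\<sigma> (ra e c) = e" using sig_eq[OF eT, of "ra e c" c] sig_idem[OF e] by simp
    have "ra e c = ra e (cc (ra e c))" using decomp[OF ra_in[OF eT, of c]] s by simp
    then have "cc (ra e c) = c" using free[OF eT] by metis
    with s show ?thesis by simp
  qed
  have sigE: "\<sigma> x \<in> E" if "x \<in> T" for x using that E_def by auto
  define Eact where "Eact h e = \<sigma> (la h e)" for h e
  define phi where "phi h e = cc (la h e)" for h e
  have laE: "la h e = ra (Eact h e) (phi h e)" if "e \<in> E" for h e
    unfolding Eact_def phi_def using decomp la_in ET that by blast
  have EactE: "Eact h e \<in> E" if "e \<in> E" for h e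
    unfolding Eact_def using sigE la_in ET that by blast
  have key: "la h (ra e c) = ra (Eact h e) (phi h e + c)" if e: "e \<in> E" for h e c
  proof -
    have "la h (ra e c) = ra (la h e) c" using comm e ET by blast
    also have "\<dots> = ra (Eact h e) (phi h e + c)"
      using laE[OF e, of h] ra_add[of "Eact h e" "phi h e" c] EactE[OF e, of h] ET by auto
    finally show ?thesis .
  qed
  have cd: "cocycle_data act E Eact phi rX sX"
    unfolding cocycle_data_def left_action_def
  proof (intro conjI allI ballI)
    fix g e assume e: "e \<in> E"
    show "Eact g e \<in> E" using EactE[OF e] .
  next
    fix e assume e: "e \<in> E"
    show "Eact 0 e = e" unfolding Eact_def using la0 ET e sig_idem by auto
  next
    fix g h e assume e: "e \<in> E"
    have "la (g + h) e = ra (Eact g (Eact h e)) (phi g (Eact h e) + phi h e)"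
      using la_add[of e g h] e ET laE[OF e, of h] key[OF EactE[OF e]] by auto
    then have "Eact (g + h) e = Eact g (Eact h e) \<and> phi (g + h) e = phi g (Eact h e) + phi h e"
      unfolding Eact_def phi_def using dec2[OF EactE[OF EactE[OF e]]] by (simp add: Eact_def)
    then show "Eact (g + h) e = Eact g (Eact h e)" "phi (g + h) e = phi g (Eact h e) + phi h e"
      by auto
  next
    fix g e assume e: "e \<in> E"
    have eT: "e \<in> T" using e ET by auto
    have "act (- phi g e) (sX (Eact g e)) = sX e"
      using sXla[OF eT, of g] laE[OF e, of g] sXra[of "Eact g e" "phi g e"] EactE[OF e, of g] ET by auto
    then show "sX (Eact g e) = act (phi g e) (sX e)" using actinv by metis
  next
    fix g e assume e: "e \<in> E"
    have eT: "e \<in> T" using e ET by auto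
    show "rX (Eact g e) = act g (rX e)"
      using rXla[OF eT, of g] laE[OF e, of g] rXra[of "Eact g e" "phi g e"] EactE[OF e, of g] ET by auto
  qed
  define f where "f x = (\<sigma> x, cc x)" for x
  have bij: "bij_betw f T (E \<times> UNIV)"
    unfolding bij_betw_def
  proof (intro conjI)
    show "inj_on f T"
    proof (rule inj_onI)
      fix x y assume "x \<in> T" "y \<in> T" "f x = f y"
      then show "x = y" using decomp[of x] decomp[of y] by (simp add: f_def)
    qed
    show "f ` T = E \<times> UNIV"
    proof
      show "f ` T \<subseteq> E \<times> UNIV" using sigE by (auto simp: f_def)
      show "E \<times> UNIV \<subseteq> f ` T"
      proof
        fix p assume "p \<in> E \<times> (UNIV :: 'g set)"
        then obtain e g where p: "p = (e, g)" "e \<in> E" by auto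
        have "f (ra e g) = p" using dec2[OF p(2), of g] p by (simp add: f_def)
        moreover have "ra e g \<in> T" using ra_in ET p by auto
        ultimately show "p \<in> f ` T" by blast
      qed
    qed
  qed
  have hm: "homeomorphic_map X (cX_top E) f"
    using bij disc_homeo[of T "E \<times> UNIV" f] unfolding cX_top_def Xd by simp
  have iso: "corr_iso X la ra rX sX (cX_top E) (cX_la Eact phi) cX_ra (cX_r rX) (cX_s act sX) f"
    unfolding corr_iso_def T_def[symmetric]
  proof (intro conjI allI ballI hm)
    fix h x assume x: "x \<in> T"
    have e: "\<sigma> x \<in> E" using sigE x by auto
    have "la h x = ra (Eact h (\<sigma> x)) (phi h (\<sigma> x) + cc x)"
      using key[OF e, of h "cc x"] decomp[OF x] by simp
    then show "f (la h x) = cX_la Eact phi h (f x)"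
      using dec2[OF EactE[OF e]] by (simp add: f_def cX_la_def)
  next
    fix g x assume x: "x \<in> T"
    have e: "\<sigma> x \<in> E" using sigE x by auto
    have "ra x g = ra (\<sigma> x) (cc x + g)"
      using decomp[OF x] ra_add sig_in[OF x] by metis
    then show "f (ra x g) = cX_ra (f x) g"
      using dec2[OF e] by (simp add: f_def cX_ra_def)
  next
    fix x assume x: "x \<in> T"
    show "cX_r rX (f x) = rX x"
      using rXra[OF sig_in[OF x]] decomp[OF x] by (metis cX_r_def f_def fst_conv)
  next
    fix x assume x: "x \<in> T"
    show "cX_s act sX (f x) = sX x"
      using sXra[OF sig_in[OF x]] decomp[OF x] by (metis cX_s_def f_def fst_conv snd_conv)
  qed
  show ?thesis using cd iso by blast
qed

theorem proposition4p3:
  fixes act :: "'g::group_add \<Rightarrow> 'v \<Rightarrow> 'v"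
  assumes act0: "\<And>v. act 0 v = v"
    and act_add: "\<And>g h v. act (g + h) v = act g (act h v)"
  shows
    "(\<forall>(E :: 'e set) Eact phi rE sE. cocycle_data act E Eact phi rE sE \<longrightarrow>
        is_corr act (cX_top E) (cX_la Eact phi) cX_ra (cX_r rE) (cX_s act sE))
   \<and> (\<forall>(X :: 'x topology) la ra rX sX. is_corr act X la ra rX sX \<longrightarrow>
        (\<exists>(E :: 'x set) Eact phi rE sE f.
           cocycle_data act E Eact phi rE sE \<and>
           corr_iso X la ra rX sX
             (cX_top E) (cX_la Eact phi) cX_ra (cX_r rE) (cX_s act sE) f))
   \<and> (\<forall>(E :: 'e set) Eact phi rE sE (E' :: 'f set) Eact' phi' rE' sE'.
        cocycle_data act E Eact phi rE sE \<and> cocycle_data act E' Eact' phi' rE' sE' \<and>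
        (\<exists>f. corr_iso (cX_top E) (cX_la Eact phi) cX_ra (cX_r rE) (cX_s act sE)
                       (cX_top E') (cX_la Eact' phi') cX_ra (cX_r rE') (cX_s act sE') f)
        \<longrightarrow> (\<exists>\<tau> (\<psi> :: 'e \<Rightarrow> 'g).
               bij_betw \<tau> E E' \<and>
               (\<forall>h. \<forall>e\<in>E. \<tau> (Eact h e) = Eact' h (\<tau> e)) \<and>
               (\<forall>e\<in>E. rE' (\<tau> e) = rE e) \<and>
               (\<forall>e\<in>E. sE' (\<tau> e) = act (- \<psi> e) (sE e)) \<and>
               (\<forall>h. \<forall>e\<in>E. phi' h (\<tau> e) = - \<psi> (Eact h e) + phi h e + \<psi> e)))
   \<and> (\<forall>(E :: 'e set) Eact phi rE sE. cocycle_data act E Eact phi rE sE \<longrightarrow>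
        (proper_corr (cX_top E) (cX_ra :: 'e \<times> 'g \<Rightarrow> 'g \<Rightarrow> 'e \<times> 'g) (cX_r rE)
           \<longleftrightarrow> (\<forall>v. finite {e \<in> E. rE e = v})))
   \<and> (\<forall>(E :: 'e set) Eact phi rE sE. cocycle_data act E Eact phi rE sE \<longrightarrow>
        (tight_corr (cX_top E) (cX_ra :: 'e \<times> 'g \<Rightarrow> 'g \<Rightarrow> 'e \<times> 'g) (cX_r rE)
           \<longleftrightarrow> bij_betw rE E UNIV))"
  proof (intro conjI allI impI)
  fix E :: "'e set" and Eact phi rE sE
  assume "cocycle_data act E Eact phi rE sE"
  then show "is_corr act (cX_top E) (cX_la Eact phi) cX_ra (cX_r rE) (cX_s act sE)"
    by (rule part1[OF act0 act_add])
next
  fix X :: "'x topology" and la ra rX sX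
  assume "is_corr act X la ra rX sX"
  then show "\<exists>(E :: 'x set) Eact phi rE sE f.
           cocycle_data act E Eact phi rE sE \<and>
           corr_iso X la ra rX sX
             (cX_top E) (cX_la Eact phi) cX_ra (cX_r rE) (cX_s act sE) f"
    by (rule part2[OF act0 act_add])
next
  fix E :: "'e set" and Eact phi rE sE and E' :: "'f set" and Eact' phi' rE' sE'
  assume H: "cocycle_data act E Eact phi rE sE \<and> cocycle_data act E' Eact' phi' rE' sE' \<and>
        (\<exists>f. corr_iso (cX_top E) (cX_la Eact phi) cX_ra (cX_r rE) (cX_s act sE)
                       (cX_top E') (cX_la Eact' phi') cX_ra (cX_r rE') (cX_s act sE') f)"
  then obtain f where iso: "corr_iso (cX_top E) (cX_la Eact phi) cX_ra (cX_r rE) (cX_s act sE)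
                       (cX_top E') (cX_la Eact' phi') cX_ra (cX_r rE') (cX_s act sE') f" by blast
  show "\<exists>\<tau> (\<psi> :: 'e \<Rightarrow> 'g).
               bij_betw \<tau> E E' \<and>
               (\<forall>h. \<forall>e\<in>E. \<tau> (Eact h e) = Eact' h (\<tau> e)) \<and>
               (\<forall>e\<in>E. rE' (\<tau> e) = rE e) \<and>
               (\<forall>e\<in>E. sE' (\<tau> e) = act (- \<psi> e) (sE e)) \<and>
               (\<forall>h. \<forall>e\<in>E. phi' h (\<tau> e) = - \<psi> (Eact h e) + phi h e + \<psi> e)"
    by (rule part3[OF act0 act_add conjunct1[OF H] conjunct1[OF conjunct2[OF H]] iso])
qed (simp_all add: part4 part5)

end
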